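(* Let $G$ be a finite simple chordless Class 1 graph with maximum degree $\Delta$, let $\gamma$ be a proper $\Delta$-coloring and $\beta$ a proper $(\Delta+1)$-coloring of $G$, and let $\mathcal C$ be the set of proper $(\Delta+1)$-colorings of $G$ that are $K$-equivalent to $\beta$. Let $\alpha\in\mathcal C$ be minimal (as defined below), with missing colors $m_\alpha$ chosen so that $m_\alpha(x)=1$ if and only if $1$ is the only color missing at $x$. If $uv$ is an ugly edge in $\alpha$ and $X_u(\alpha,v)=(ux_0,ux_1,\dots,ux_p)$ with $x_0=v$ and $p\ge 1$, then $vx_p\notin E(G)$.
   Context: A (proper) $t$-coloring of $G$ is a map $\alpha:E(G)\to\{1,\dots,t\}$ with adjacent edges receiving different colors; $M(\alpha,j)$ is the set of edges of color $j$. $K_\alpha(c,d)$ is the subgraph formed by edges colored $c$ or $d$; a $K$-change swaps the two colors on one connected component of some $K_\alpha(c,d)$; two $t$-colorings are $K$-equivalent if one is obtained from the other by a finite sequence of $K$-changes using colors from $\{1,\dots,t\}$. Class 1 means $\chi'(G)=\Delta(G)$. A graph is chordless if no cycle $C$ has a chord (an edge joining two non-consecutive vertices of $C$). In a coloring in $\mathcal C$, an edge is bad if it lies in $M(\gamma,1)$ but is not colored $1$, and ugly if it is not in $M(\gamma,1)$ but is colored $1$. A coloring $\alpha\in\mathcal C$ is minimal if, among the colorings in $\mathcal C$ with the minimum number of bad edges, it has the minimum number of ugly edges. A color $c$ is missing at $x$ if no edge at $x$ has color $c$; $m_\alpha(x)$ is a fixed chosen missing color at $x$. An $\alpha$-fan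 at $u$ is a sequence of distinct edges $(ux_0,\dots,ux_p)$ at $u$ with $m_\alpha(x_i)=\alpha(ux_{i+1})$ for $0\le i<p$, and such that either $m_\alpha(x_p)$ is missing at $u$ or $m_\alpha(x_p)\in\{\alpha(ux_0),\dots,\alpha(ux_{p-1})\}$; $X_u(\alpha,v)$ denotes the unique such fan with $x_0=v$. *)

theory Defs
  imports Main
begin

definition simple_graph :: "'a set \<Rightarrow> 'a set set \<Rightarrow> bool" where
  "simple_graph V E \<longleftrightarrow> finite V \<and> (\<forall>e\<in>E. \<exists>x y. x \<in> V \<and> y \<in> V \<and> x \<noteq> y \<and> e = {x, y})"

definition degree :: "'a set set \<Rightarrow> 'a \<Rightarrow> nat" where
  "degree E x = card {e \<in> E. x \<in> e}"

definition max_degree :: "'a set \<Rightarrow> 'a set set \<Rightarrow> nat" where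
  "max_degree V E = Max (insert 0 (degree E ` V))"

definition proper_coloring :: "'a set set \<Rightarrow> nat \<Rightarrow> ('a set \<Rightarrow> nat) \<Rightarrow> bool" where
  "proper_coloring E t \<alpha> \<longleftrightarrow>
     (\<forall>e\<in>E. \<alpha> e \<in> {1..t}) \<and>
     (\<forall>e\<in>E. \<forall>f\<in>E. e \<noteq> f \<and> e \<inter> f \<noteq> {} \<longrightarrow> \<alpha> e \<noteq> \<alpha> f)"

definition chromatic_index :: "'a set set \<Rightarrow> nat" where
  "chromatic_index E = (LEAST t. \<exists>\<alpha>. proper_coloring E t \<alpha>)"

definition class1 :: "'a set \<Rightarrow> 'a set set \<Rightarrow> bool" where
  "class1 V E \<longleftrightarrow> chromatic_index E = max_degree V E"

definition is_cycle :: "'a set set \<Rightarrow> 'a list \<Rightarrow> bool" where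
  "is_cycle E vs \<longleftrightarrow> length vs \<ge> 3 \<and> distinct vs \<and>
     (\<forall>i < length vs. {vs ! i, vs ! ((i + 1) mod length vs)} \<in> E)"

definition chordless :: "'a set set \<Rightarrow> bool" where
  "chordless E \<longleftrightarrow> (\<forall>vs i j. is_cycle E vs \<and> i < length vs \<and> j < length vs \<and>
       {vs ! i, vs ! j} \<in> E \<longrightarrow>
       j = (i + 1) mod length vs \<or> i = (j + 1) mod length vs)"

text \<open>K_alpha(c,d): edges coloured c or d; a K-change swaps c and d on one
  connected component (given as the set of edges connected to an edge e
  within K_alpha(c,d)).\<close>

definition Kedges :: "'a set set \<Rightarrow> ('a set \<Rightarrow> nat) \<Rightarrow> nat \<Rightarrow> nat \<Rightarrow> 'a set set" where
  "Kedges E \<alpha> c d = {e \<in> E. \<alpha> e = c \<or> \<alpha> e = d}"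

definition Kadj :: "'a set set \<Rightarrow> ('a set \<Rightarrow> nat) \<Rightarrow> nat \<Rightarrow> nat \<Rightarrow> ('a set \<times> 'a set) set" where
  "Kadj E \<alpha> c d = {(e, f). e \<in> Kedges E \<alpha> c d \<and> f \<in> Kedges E \<alpha> c d \<and> e \<inter> f \<noteq> {}}"

definition Kcomponent :: "'a set set \<Rightarrow> ('a set \<Rightarrow> nat) \<Rightarrow> nat \<Rightarrow> nat \<Rightarrow> 'a set \<Rightarrow> 'a set set" where
  "Kcomponent E \<alpha> c d e = {f. (e, f) \<in> (Kadj E \<alpha> c d)\<^sup>*}"

definition Kchange :: "'a set set \<Rightarrow> nat \<Rightarrow> ('a set \<Rightarrow> nat) \<Rightarrow> ('a set \<Rightarrow> nat) \<Rightarrow> bool" where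
  "Kchange E t \<alpha> \<alpha>' \<longleftrightarrow>
     (\<exists>c d e. c \<in> {1..t} \<and> d \<in> {1..t} \<and> c \<noteq> d \<and> e \<in> Kedges E \<alpha> c d \<and>
        (\<forall>f. \<alpha>' f = (if f \<in> Kcomponent E \<alpha> c d e
                        then (if \<alpha> f = c then d else c) else \<alpha> f)))"

definition K_equivalent :: "'a set set \<Rightarrow> nat \<Rightarrow> ('a set \<Rightarrow> nat) \<Rightarrow> ('a set \<Rightarrow> nat) \<Rightarrow> bool" where
  "K_equivalent E t \<alpha> \<beta> \<longleftrightarrow> (Kchange E t)\<^sup>*\<^sup>* \<alpha> \<beta>"

definition Ccol :: "'a set \<Rightarrow> 'a set set \<Rightarrow> ('a set \<Rightarrow> nat) \<Rightarrow> ('a set \<Rightarrow> nat) set" where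
  "Ccol V E \<beta> = {\<alpha>. proper_coloring E (max_degree V E + 1) \<alpha> \<and>
                      K_equivalent E (max_degree V E + 1) \<beta> \<alpha>}"

definition bad_edges :: "'a set set \<Rightarrow> ('a set \<Rightarrow> nat) \<Rightarrow> ('a set \<Rightarrow> nat) \<Rightarrow> 'a set set" where
  "bad_edges E \<gamma> \<alpha> = {e \<in> E. \<gamma> e = 1 \<and> \<alpha> e \<noteq> 1}"

definition ugly_edges :: "'a set set \<Rightarrow> ('a set \<Rightarrow> nat) \<Rightarrow> ('a set \<Rightarrow> nat) \<Rightarrow> 'a set set" where
  "ugly_edges E \<gamma> \<alpha> = {e \<in> E. \<gamma> e \<noteq> 1 \<and> \<alpha> e = 1}"

definition minimal_col :: "'a set \<Rightarrow> 'a set set \<Rightarrow> ('a set \<Rightarrow> nat) \<Rightarrow> ('a set \<Rightarrow> nat) \<Rightarrow> ('a set \<Rightarrow> nat) \<Rightarrow> bool" where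
  "minimal_col V E \<gamma> \<beta> \<alpha> \<longleftrightarrow> \<alpha> \<in> Ccol V E \<beta> \<and>
     (\<forall>\<alpha>'\<in>Ccol V E \<beta>. card (bad_edges E \<gamma> \<alpha>) \<le> card (bad_edges E \<gamma> \<alpha>')) \<and>
     (\<forall>\<alpha>'\<in>Ccol V E \<beta>. card (bad_edges E \<gamma> \<alpha>') = card (bad_edges E \<gamma> \<alpha>) \<longrightarrow>
         card (ugly_edges E \<gamma> \<alpha>) \<le> card (ugly_edges E \<gamma> \<alpha>'))"

definition missing :: "'a set set \<Rightarrow> nat \<Rightarrow> ('a set \<Rightarrow> nat) \<Rightarrow> 'a \<Rightarrow> nat \<Rightarrow> bool" where
  "missing E t \<alpha> x c \<longleftrightarrow> c \<in> {1..t} \<and> \<not> (\<exists>e\<in>E. x \<in> e \<and> \<alpha> e = c)"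

text \<open>An alpha-fan at u, given by the list [x_0, ..., x_p] of the far ends of
  its edges u x_0, ..., u x_p, with respect to the chosen missing-colour map m.\<close>

definition is_fan :: "'a set set \<Rightarrow> nat \<Rightarrow> ('a set \<Rightarrow> nat) \<Rightarrow> ('a \<Rightarrow> nat) \<Rightarrow> 'a \<Rightarrow> 'a list \<Rightarrow> bool" where
  "is_fan E t \<alpha> m u xs \<longleftrightarrow> xs \<noteq> [] \<and> distinct xs \<and>
     (\<forall>x\<in>set xs. {u, x} \<in> E) \<and>
     (\<forall>i. Suc i < length xs \<longrightarrow> m (xs ! i) = \<alpha> {u, xs ! Suc i}) \<and>
     (missing E t \<alpha> u (m (last xs)) \<or>
      m (last xs) \<in> {\<alpha> {u, xs ! i} | i. i < length xs - 1})"

end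

theory Submission
  imports Defs "HOL-Library.Transitive_Closure_Table"
begin

lemma edge_other:
  assumes "simple_graph V E" "g \<in> E" "z \<in> g"
  shows "\<exists>z'. g = {z,z'} \<and> z' \<noteq> z"
proof -
  obtain x y where "x \<in> V" "y \<in> V" "x \<noteq> y" "g = {x,y}"
    using assms unfolding simple_graph_def by blast
  then have "z = x \<or> z = y" using assms(3) by blast
  then show ?thesis
  proof
    assume "z = x" then show ?thesis using \<open>g = {x,y}\<close> \<open>x \<noteq> y\<close> by blast
  next
    assume "z = y" then show ?thesis using \<open>g = {x,y}\<close> \<open>x \<noteq> y\<close> by (metis insert_commute)
  qed
qed

lemma finite_E:
  assumes "simple_graph V E" shows "finite E"
proof -
  have "\<forall>e\<in>E. e \<subseteq> V"
  proof
    fix e assume "e \<in> E"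
    then obtain x y where "x \<in> V" "y \<in> V" "e = {x,y}"
      using assms unfolding simple_graph_def by blast
    then show "e \<subseteq> V" by simp
  qed
  then have "E \<subseteq> Pow V" by blast
  moreover have "finite V" using assms unfolding simple_graph_def by blast
  ultimately show ?thesis by (simp add: finite_subset)
qed

lemma missing_exists:
  assumes G: "simple_graph V E" and x: "x \<in> V"
  shows "\<exists>d\<in>{1..max_degree V E + 1}. \<not>(\<exists>e\<in>E. x\<in>e \<and> \<alpha> e = d)"
proof (rule ccontr)
  assume A: "\<not> ?thesis"
  let ?S = "{e \<in> E. x \<in> e}"
  have fin: "finite ?S" using finite_E[OF G] by simp
  have sub: "{1..max_degree V E + 1} \<subseteq> \<alpha> ` ?S"
  proof
    fix d assume "d \<in> {1..max_degree V E + 1}"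
    then have "\<exists>e\<in>E. x\<in>e \<and> \<alpha> e = d" using A by blast
    then obtain e where "e \<in> E" "x \<in> e" "\<alpha> e = d" by blast
    then show "d \<in> \<alpha> ` ?S" by (simp add: image_iff) (metis)
  qed
  have "card {1..max_degree V E + 1} \<le> card (\<alpha> ` ?S)"
    using fin sub by (meson card_mono finite_imageI)
  also have "\<dots> \<le> card ?S" using fin by (rule card_image_le)
  also have "\<dots> = degree E x" by (simp add: degree_def)
  also have "\<dots> \<le> max_degree V E"
  proof -
    have "finite V" using G unfolding simple_graph_def by blast
    then show ?thesis unfolding max_degree_def using x by (intro Max_ge) auto
  qed
  finally show False by simp
qed


lemma edge_facts:
  assumes "simple_graph V E" "{a,b} \<in> E"
  shows "a \<noteq> b \<and> a \<in> V \<and> b \<in> V"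
proof -
  obtain x y where "x \<in> V" "y \<in> V" "x \<noteq> y" "{a,b} = {x,y}"
    using assms unfolding simple_graph_def by blast
  then have "(a=x \<and> b=y) \<or> (a=y \<and> b=x)" by (simp add: doubleton_eq_iff)
  then show ?thesis using \<open>x \<in> V\<close> \<open>y \<in> V\<close> \<open>x \<noteq> y\<close> by blast
qed

lemma path_props:
  assumes "rtrancl_path r x xs z"
  shows "(\<forall>i<length xs. r ((x#xs)!i) (xs!i)) \<and> last (x#xs) = z"
  using assms
proof induct
  case (base x) then show ?case by simp
next
  case (step x y ys z)
  show ?case
  proof (intro conjI allI impI)
    fix i assume i: "i < length (y#ys)"
    show "r ((x#y#ys)!i) ((y#ys)!i)"
    proof (cases i)
      case 0 then show ?thesis using step by simp
    next
      case (Suc j) then show ?thesis using step i by simp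
    qed
  next
    show "last (x#y#ys) = z" using step by simp
  qed
qed

lemma no_escape:
  assumes G: "simple_graph V E" and CL: "chordless E"
    and dpq: "p\<noteq>q" "p\<noteq>w" "q\<noteq>w"
    and e1: "{p,q}\<in>E" "{p,w}\<in>E" "{q,w}\<in>E"
    and py: "{p,y}\<in>E" "y\<noteq>q" "y\<noteq>w"
    and R: "(\<lambda>z z'. {z,z'}\<in>E \<and> z\<notin>{p,q,w} \<and> z'\<noteq>p)\<^sup>*\<^sup>* y s"
    and s: "s = q \<or> s = w"
  shows False
proof -
  let ?B = "\<lambda>z z'. {z,z'}\<in>E \<and> z\<notin>{p,q,w} \<and> z'\<noteq>p"
  have yp: "y \<noteq> p" using edge_facts[OF G py(1)] by blast
  obtain xs0 where "rtrancl_path ?B y xs0 s"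
    using rtranclp_eq_rtrancl_path[THEN iffD1, OF R] by blast
  then obtain xs where P: "rtrancl_path ?B y xs s" and D: "distinct (y#xs)"
    by (rule rtrancl_path_distinct)
  have ne: "xs \<noteq> []"
  proof
    assume "xs = []"
    with P have "y = s" by (auto elim: rtrancl_path.cases)
    with s py show False by blast
  qed
  obtain t where t: "t = q \<or> t = w" "t \<noteq> s" "{s,t} \<in> E"
  proof (cases "s = q")
    case True then show ?thesis using that[of w] e1 dpq by blast
  next
    case False then have "s = w" using s by blast
    then show ?thesis using that[of q] e1 dpq by (metis insert_commute)
  qed
  have ps: "{p,s} \<in> E" using s e1 by blast
  have pt: "{t,p} \<in> E" using t e1 by (metis insert_commute)
  define L where "L = y#xs"
  define n where "n = length L"
  have n2: "n \<ge> 2" using ne unfolding n_def L_def by (cases xs) auto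
  have PP: "\<forall>i<length xs. ?B (L!i) (xs!i)" "last L = s"
    using path_props[OF P] unfolding L_def by blast+
  have L_step: "?B (L!i) (L!(Suc i))" if "Suc i < n" for i
    using PP(1) that unfolding n_def L_def by simp
  have "last L = L!(n-1)" unfolding n_def L_def by (rule last_conv_nth) simp
  then have L_last: "L!(n-1) = s" using PP(2) by simp
  have L_notp: "L!i \<noteq> p" if "i < n" for i
  proof (cases i)
    case 0 then show ?thesis using yp unfolding L_def by simp
  next
    case (Suc j) then show ?thesis using L_step[of j] that by simp
  qed
  have L_notqw: "L!i \<noteq> q \<and> L!i \<noteq> w" if "Suc i < n" for i
    using L_step[OF that] by simp
  have tL: "t \<notin> set L"
  proof
    assume "t \<in> set L"
    then obtain i where i: "i < n" "L!i = t" unfolding n_def by (metis in_set_conv_nth)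
    show False
    proof (cases "Suc i < n")
      case True then show False using L_notqw[OF True] i t(1) by blast
    next
      case False then have "i = n - 1" using i by simp
      then show False using L_last i t(2) by simp
    qed
  qed
  have pL: "p \<notin> set L"
  proof
    assume "p \<in> set L"
    then obtain i where i: "i < n" "L!i = p" unfolding n_def by (metis in_set_conv_nth)
    then show False using L_notp by blast
  qed
  have tp: "t \<noteq> p" using t dpq by blast
  define vs where "vs = p # L @ [t]"
  have lv: "length vs = n + 2" unfolding vs_def n_def by simp
  have v0: "vs!0 = p" unfolding vs_def by simp
  have vS: "vs!(Suc i) = L!i" if "i < n" for i
    using that unfolding vs_def n_def by (simp add: nth_append)
  have vn: "vs!(Suc n) = t" unfolding vs_def n_def by (simp add: nth_append)
  have cyc: "is_cycle E vs"
    unfolding is_cycle_def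
  proof (intro conjI allI impI)
    show "3 \<le> length vs" using lv n2 by simp
    have "distinct L" using D unfolding L_def .
    then show "distinct vs" unfolding vs_def using tL pL tp by simp
    fix i assume i: "i < length vs"
    show "{vs ! i, vs ! ((i + 1) mod length vs)} \<in> E"
    proof (cases "i = Suc n")
      case True
      then have "(i+1) mod length vs = 0" using lv by simp
      then show ?thesis using True vn v0 pt by simp
    next
      case False
      then have ile: "i \<le> n" using i lv by simp
      then have md: "(i+1) mod length vs = Suc i" using lv by simp
      show ?thesis
      proof (cases i)
        case 0 then show ?thesis using md v0 vS[of 0] n2 py(1) unfolding L_def by simp
      next
        case (Suc k)
        then have k: "k < n" using ile by simp
        show ?thesis
        proof (cases "Suc k < n")
          case True
          then show ?thesis using md Suc vS[OF k] vS[OF True] L_step[OF True] by simp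
        next
          case False
          then have "k = n - 1" "Suc k = n" using k by auto
          then show ?thesis using md Suc vS[OF k] vn L_last t(3) by simp
        qed
      qed
    qed
  qed
  have "vs!n = s" using vS[of "n-1"] L_last n2 by simp
  then have "{vs!0, vs!n} \<in> E" using v0 ps by simp
  then have "n = (0 + 1) mod length vs \<or> 0 = (n + 1) mod length vs"
  proof -
    have "0 < length vs" "n < length vs" using lv by simp_all
    then show ?thesis using CL cyc \<open>{vs!0, vs!n} \<in> E\<close> unfolding chordless_def by blast
  qed
  then show False using lv n2 by simp
qed



lemma comp_kedges:
  assumes "e \<in> Kedges E \<alpha> c d" "f \<in> Kcomponent E \<alpha> c d e"
  shows "f \<in> Kedges E \<alpha> c d"
proof -
  have "(e,f) \<in> (Kadj E \<alpha> c d)\<^sup>*" using assms(2) unfolding Kcomponent_def by simp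
  then show ?thesis
  proof (induct rule: rtrancl_induct)
    case base then show ?case using assms(1) .
  next
    case (step f g) then show ?case unfolding Kadj_def by simp
  qed
qed

lemma comp_closed:
  assumes "e \<in> Kedges E \<alpha> c d" "f \<in> Kcomponent E \<alpha> c d e"
    and "g \<in> Kedges E \<alpha> c d" "f \<inter> g \<noteq> {}"
  shows "g \<in> Kcomponent E \<alpha> c d e"
proof -
  have f: "f \<in> Kedges E \<alpha> c d" using comp_kedges[OF assms(1,2)] .
  have "(f,g) \<in> Kadj E \<alpha> c d" using f assms(3,4) unfolding Kadj_def by simp
  moreover have "(e,f) \<in> (Kadj E \<alpha> c d)\<^sup>*" using assms(2) unfolding Kcomponent_def by simp
  ultimately have "(e,g) \<in> (Kadj E \<alpha> c d)\<^sup>*" by (meson rtrancl_into_rtrancl)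
  then show ?thesis unfolding Kcomponent_def by simp
qed

lemma proper_Kchange:
  assumes P: "proper_coloring E t \<alpha>" and K: "Kchange E t \<alpha> \<alpha>'"
  shows "proper_coloring E t \<alpha>'"
proof -
  obtain c d e where cd: "c \<in> {1..t}" "d \<in> {1..t}" "c \<noteq> d" and e: "e \<in> Kedges E \<alpha> c d"
    and H: "\<And>f. \<alpha>' f = (if f \<in> Kcomponent E \<alpha> c d e
                        then (if \<alpha> f = c then d else c) else \<alpha> f)"
    using K unfolding Kchange_def by blast
  let ?K = "Kcomponent E \<alpha> c d e"
  have inK: "\<alpha> f \<in> {c,d}" if "f \<in> ?K" for f
    using comp_kedges[OF e that] unfolding Kedges_def by simp
  have outK: "\<alpha> f \<notin> {c,d}" if "f \<notin> ?K" "f \<in> E" "g \<in> ?K" "f \<inter> g \<noteq> {}" for f g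
  proof
    assume "\<alpha> f \<in> {c,d}"
    then have "f \<in> Kedges E \<alpha> c d" using that(2) unfolding Kedges_def by simp
    then have "f \<in> ?K" using comp_closed[OF e that(3)] that(4) by (simp add: inf_commute)
    then show False using that(1) by simp
  qed
  show ?thesis
    unfolding proper_coloring_def
  proof (intro conjI ballI impI)
    fix f assume f: "f \<in> E"
    show "\<alpha>' f \<in> {1..t}"
      using P f cd H[of f] unfolding proper_coloring_def by auto
  next
    fix f g assume f: "f \<in> E" and g: "g \<in> E" and fg: "f \<noteq> g \<and> f \<inter> g \<noteq> {}"
    have ne: "\<alpha> f \<noteq> \<alpha> g" using P f g fg unfolding proper_coloring_def by blast
    show "\<alpha>' f \<noteq> \<alpha>' g"
    proof (cases "f \<in> ?K")
      case True
      note fK = True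
      show ?thesis
      proof (cases "g \<in> ?K")
        case True
        then show ?thesis using fK H[of f] H[of g] inK[OF fK] inK[OF True] ne cd by auto
      next
        case False
        have "\<alpha> g \<notin> {c,d}" using outK[OF False g fK] fg by (simp add: inf_commute)
        then show ?thesis using fK False H[of f] H[of g] by auto
      qed
    next
      case False
      note fK = False
      show ?thesis
      proof (cases "g \<in> ?K")
        case True
        have "\<alpha> f \<notin> {c,d}" using outK[OF fK f True] fg by simp
        then show ?thesis using fK True H[of f] H[of g] by auto
      next
        case False
        then show ?thesis using fK H[of f] H[of g] ne by auto
      qed
    qed
  qed
qed



lemma kstep:
  assumes G: "simple_graph V E" and CL: "chordless E"
    and P: "proper_coloring E t \<alpha>0"
    and dpq: "p\<noteq>q" "p\<noteq>w" "q\<noteq>w"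
    and e1: "{p,q}\<in>E" "{p,w}\<in>E" "{q,w}\<in>E"
    and py: "{p,y} \<in> E" "\<alpha>0 {p,y} = c"
    and cq: "c \<noteq> \<alpha>0 {p,q}" "c \<noteq> \<alpha>0 {p,w}"
    and c: "c \<in> {1..t}" and d: "d \<in> {1..t}"
    and dmiss: "\<not>(\<exists>f\<in>E. p\<in>f \<and> \<alpha>0 f = d)"
  shows "\<exists>\<alpha>1. Kchange E t \<alpha>0 \<alpha>1 \<and> (\<forall>f. \<alpha>1 f \<noteq> \<alpha>0 f \<longrightarrow> f \<in> E \<and> \<alpha>0 f \<in> {c,d} \<and> \<alpha>1 f \<in> {c,d})
     \<and> (\<forall>f\<in>E. q\<in>f \<or> w\<in>f \<longrightarrow> \<alpha>1 f = \<alpha>0 f) \<and> \<not>(\<exists>f\<in>E. p\<in>f \<and> \<alpha>1 f = c)"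
proof -
  define e where "e = {p,y}"
  define K where "K = Kcomponent E \<alpha>0 c d e"
  define \<alpha>1 where "\<alpha>1 = (\<lambda>f. if f \<in> K then (if \<alpha>0 f = c then d else c) else \<alpha>0 f)"
  let ?B = "\<lambda>z z'. {z,z'}\<in>E \<and> z\<notin>{p,q,w} \<and> z'\<noteq>p"
  have cd: "c \<noteq> d" using dmiss py unfolding e_def by blast
  have eK: "e \<in> Kedges E \<alpha>0 c d" using py unfolding e_def Kedges_def by simp
  have einK: "e \<in> K" unfolding K_def Kcomponent_def by simp
  have yq: "y \<noteq> q" using py cq by blast
  have yw: "y \<noteq> w" using py cq by blast
  have pe: "p \<in> e" unfolding e_def by simp
  have prp: "\<alpha>0 f \<noteq> \<alpha>0 g" if "f \<in> E" "g \<in> E" "f \<noteq> g" "f \<inter> g \<noteq> {}" for f g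
    using P that unfolding proper_coloring_def by blast
  have at_p: "f = e" if "f \<in> K" "p \<in> f" for f
  proof (rule ccontr)
    assume fe: "f \<noteq> e"
    have fk: "f \<in> Kedges E \<alpha>0 c d" using comp_kedges[OF eK] that(1) unfolding K_def by simp
    then have fE: "f \<in> E" and fc: "\<alpha>0 f = c \<or> \<alpha>0 f = d" unfolding Kedges_def by auto
    show False
    proof (cases "\<alpha>0 f = d")
      case True then show False using dmiss fE that(2) by blast
    next
      case False
      then have "\<alpha>0 f = c" using fc by simp
      moreover have "\<alpha>0 f \<noteq> \<alpha>0 e" using prp[OF fE py(1)[folded e_def] fe] that(2) pe by blast
      ultimately show False using py unfolding e_def by simp
    qed
  qed
  have noesc: "\<not> ?B\<^sup>*\<^sup>* y s" if "s = q \<or> s = w" for s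
    using no_escape[OF G CL dpq e1 py(1) yq yw _ that] by blast
  have inv: "f \<subseteq> insert p {z. ?B\<^sup>*\<^sup>* y z}" if "f \<in> K" for f
  proof -
    have "(e,f) \<in> (Kadj E \<alpha>0 c d)\<^sup>*" using that unfolding K_def Kcomponent_def by simp
    then show ?thesis
    proof (induct rule: rtrancl_induct)
      case base then show ?case unfolding e_def by simp
    next
      case (step f g)
      have gK: "g \<in> K" using step(1,2) unfolding K_def Kcomponent_def by (meson rtrancl_into_rtrancl mem_Collect_eq)
      have gk: "g \<in> Kedges E \<alpha>0 c d" and fg: "f \<inter> g \<noteq> {}" using step(2) unfolding Kadj_def by auto
      then have gE: "g \<in> E" unfolding Kedges_def by simp
      show ?case
      proof (cases "p \<in> g")
        case True
        then have "g = e" using at_p gK by blast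
        then show ?thesis unfolding e_def by simp
      next
        case False
        obtain z where z: "z \<in> f" "z \<in> g" using fg by blast
        have zp: "z \<noteq> p" using z False by blast
        have zR: "?B\<^sup>*\<^sup>* y z" using step(3) z zp by blast
        obtain z' where g2: "g = {z,z'}" "z' \<noteq> z" using edge_other[OF G gE z(2)] by blast
        have z'p: "z' \<noteq> p" using False g2 by blast
        have zqw: "z \<noteq> q \<and> z \<noteq> w" using noesc zR by blast
        have "?B z z'" using gE g2 zp zqw z'p by simp
        then have "?B\<^sup>*\<^sup>* y z'" by (rule rtranclp.rtrancl_into_rtrancl[OF zR])
        then show ?thesis using g2 zR by simp
      qed
    qed
  qed
  have notqw: "q \<notin> f \<and> w \<notin> f" if "f \<in> K" for f
    using inv[OF that] noesc dpq by blast
  have A1: "Kchange E t \<alpha>0 \<alpha>1"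
      unfolding Kchange_def
      using c d cd eK unfolding \<alpha>1_def K_def by blast
  have A2: "\<forall>f. \<alpha>1 f \<noteq> \<alpha>0 f \<longrightarrow> f \<in> E \<and> \<alpha>0 f \<in> {c,d} \<and> \<alpha>1 f \<in> {c,d}"
  proof (intro allI impI)
    fix f assume "\<alpha>1 f \<noteq> \<alpha>0 f"
    then have fK: "f \<in> K" unfolding \<alpha>1_def by (auto split: if_splits)
    have "f \<in> Kedges E \<alpha>0 c d" using comp_kedges[OF eK] fK unfolding K_def by simp
    then show "f \<in> E \<and> \<alpha>0 f \<in> {c,d} \<and> \<alpha>1 f \<in> {c,d}"
      using fK unfolding Kedges_def \<alpha>1_def by auto
  qed
  have A3: "\<forall>f\<in>E. q\<in>f \<or> w\<in>f \<longrightarrow> \<alpha>1 f = \<alpha>0 f"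
  proof (intro ballI impI)
    fix f assume "f \<in> E" "q \<in> f \<or> w \<in> f"
    then have "f \<notin> K" using notqw by blast
    then show "\<alpha>1 f = \<alpha>0 f" unfolding \<alpha>1_def by simp
  qed
  have A4: "\<not>(\<exists>f\<in>E. p\<in>f \<and> \<alpha>1 f = c)"
  proof
    assume "\<exists>f\<in>E. p\<in>f \<and> \<alpha>1 f = c"
    then obtain f where f: "f \<in> E" "p \<in> f" "\<alpha>1 f = c" by blast
    show False
    proof (cases "f \<in> K")
      case True
      then have "f = e" using at_p f(2) by blast
      then show False using f(3) einK py cd unfolding \<alpha>1_def e_def by simp
    next
      case False
      then have "\<alpha>0 f = c" using f(3) unfolding \<alpha>1_def by simp
      moreover have "f \<noteq> e" using False einK by blast
      moreover have "f \<inter> e \<noteq> {}" using f(2) pe by blast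
      ultimately show False using prp[OF f(1) py(1)[folded e_def]] py(2) unfolding e_def by simp
    qed
  qed
  show ?thesis using A1 A2 A3 A4 by blast
qed



lemma make_missing:
  assumes G: "simple_graph V E" and CL: "chordless E"
    and P: "proper_coloring E t \<alpha>0" and tD: "t = max_degree V E + 1"
    and dpq: "p\<noteq>q" "p\<noteq>w" "q\<noteq>w"
    and e1: "{p,q}\<in>E" "{p,w}\<in>E" "{q,w}\<in>E"
    and c: "c \<in> {1..t}" and cq: "c \<noteq> \<alpha>0 {p,q}" "c \<noteq> \<alpha>0 {p,w}"
    and one: "\<alpha>0 {p,q} = 1"
  shows "\<exists>\<alpha>1. (Kchange E t)\<^sup>*\<^sup>* \<alpha>0 \<alpha>1 \<and> proper_coloring E t \<alpha>1 \<and> (\<forall>f. \<alpha>1 f = 1 \<longleftrightarrow> \<alpha>0 f = 1)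
     \<and> (\<forall>f\<in>E. q\<in>f \<or> w\<in>f \<longrightarrow> \<alpha>1 f = \<alpha>0 f) \<and> \<not>(\<exists>f\<in>E. p\<in>f \<and> \<alpha>1 f = c)"
proof (cases "\<exists>f\<in>E. p\<in>f \<and> \<alpha>0 f = c")
  case False
  then show ?thesis using P by blast
next
  case True
  then obtain f where f: "f \<in> E" "p \<in> f" "\<alpha>0 f = c" by blast
  obtain y where y: "f = {p,y}" using edge_other[OF G f(1) f(2)] by blast
  have pV: "p \<in> V" using edge_facts[OF G e1(1)] by blast
  obtain d where d: "d \<in> {1..t}" and dm: "\<not>(\<exists>f\<in>E. p\<in>f \<and> \<alpha>0 f = d)"
    using missing_exists[OF G pV, of \<alpha>0] tD by blast
  have d1: "d \<noteq> 1" using dm e1(1) one by blast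
  have c1: "c \<noteq> 1" using cq one by simp
  obtain \<alpha>1 where K: "Kchange E t \<alpha>0 \<alpha>1"
    and ch: "\<forall>f. \<alpha>1 f \<noteq> \<alpha>0 f \<longrightarrow> f \<in> E \<and> \<alpha>0 f \<in> {c,d} \<and> \<alpha>1 f \<in> {c,d}"
    and un: "\<forall>f\<in>E. q\<in>f \<or> w\<in>f \<longrightarrow> \<alpha>1 f = \<alpha>0 f"
    and mi: "\<not>(\<exists>f\<in>E. p\<in>f \<and> \<alpha>1 f = c)"
    using kstep[OF G CL P dpq e1, of y c d] f y c d dm cq by blast
  have "\<forall>f. \<alpha>1 f = 1 \<longleftrightarrow> \<alpha>0 f = 1"
  proof
    fix f show "\<alpha>1 f = 1 \<longleftrightarrow> \<alpha>0 f = 1"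
    proof (cases "\<alpha>1 f = \<alpha>0 f")
      case True then show ?thesis by simp
    next
      case False then show ?thesis using ch c1 d1 by auto
    qed
  qed
  moreover have "proper_coloring E t \<alpha>1" using proper_Kchange[OF P K] .
  moreover have "(Kchange E t)\<^sup>*\<^sup>* \<alpha>0 \<alpha>1" using K by simp
  ultimately show ?thesis using un mi by blast
qed

lemma hd_last_distinct:
  assumes "distinct xs" "length xs \<ge> 2"
  shows "hd xs \<noteq> last xs"
proof -
  obtain a b r where "xs = a#b#r" using assms(2)
    by (metis One_nat_def Suc_1 Suc_le_length_iff le_Suc_eq length_Cons list.size(3) not_numeral_le_zero)
  then show ?thesis using assms(1) by (metis distinct.simps(2) last_ConsR last_in_set list.discI list.sel(1))
qed



lemma prop_app:
  assumes "proper_coloring E t \<delta>" "e\<in>E" "f\<in>E" "e\<noteq>f" "e\<inter>f\<noteq>{}"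
  shows "\<delta> e \<noteq> \<delta> f"
  using assms unfolding proper_coloring_def by blast

theorem mainTheorem6:
  fixes V :: "'a set" and E :: "'a set set"
    and \<gamma> \<beta> \<alpha> :: "'a set \<Rightarrow> nat" and m :: "'a \<Rightarrow> nat"
    and u v :: 'a and xs :: "'a list"
  assumes graph: "simple_graph V E"
    and chordless: "chordless E"
    and class1: "class1 V E"
    and gamma: "proper_coloring E (max_degree V E) \<gamma>"
    and beta: "proper_coloring E (max_degree V E + 1) \<beta>"
    and minimal: "minimal_col V E \<gamma> \<beta> \<alpha>"
    and m_missing: "\<forall>x\<in>V. missing E (max_degree V E + 1) \<alpha> x (m x)"
    and m_one: "\<forall>x\<in>V. m x = 1 \<longleftrightarrow> {c. missing E (max_degree V E + 1) \<alpha> x c} = {1}"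
    and ugly: "{u, v} \<in> ugly_edges E \<gamma> \<alpha>"
    and fan: "is_fan E (max_degree V E + 1) \<alpha> m u xs"
    and x0: "hd xs = v"
    and p_ge_1: "length xs \<ge> 2"
  shows "{v, last xs} \<notin> E"
proof
  assume vwE: "{v, last xs} \<in> E"
  define w where "w = last xs"
  define D where "D = max_degree V E"
  define t where "t = D + 1"
  have vw: "{v,w} \<in> E" using vwE unfolding w_def .
  have fan': "distinct xs" "\<forall>x\<in>set xs. {u,x} \<in> E" "xs \<noteq> []"
    using fan unfolding is_fan_def by blast+
  have uw: "{u,w} \<in> E" using fan' unfolding w_def by simp
  have vw_ne: "v \<noteq> w" using hd_last_distinct[OF fan'(1) p_ge_1] x0 unfolding w_def by simp
  have uv: "{u,v} \<in> E" and guv: "\<gamma> {u,v} \<noteq> 1" and auv: "\<alpha> {u,v} = 1"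
    using ugly unfolding ugly_edges_def by auto
  have uv_ne: "u \<noteq> v" using edge_facts[OF graph uv] by blast
  have uw_ne: "u \<noteq> w" using edge_facts[OF graph uw] by blast
  have uV: "u \<in> V" and vV: "v \<in> V" using edge_facts[OF graph uv] by blast+
  have aC: "\<alpha> \<in> Ccol V E \<beta>" using minimal unfolding minimal_col_def by blast
  then have Pa: "proper_coloring E t \<alpha>" and Ka: "(Kchange E t)\<^sup>*\<^sup>* \<beta> \<alpha>"
    unfolding Ccol_def K_equivalent_def t_def D_def by auto
  have e12: "{u,v} \<noteq> {u,w}" using vw_ne uv_ne uw_ne by (simp add: doubleton_eq_iff)
  have e13: "{u,v} \<noteq> {v,w}" using vw_ne uv_ne uw_ne by (simp add: doubleton_eq_iff)
  have e23: "{u,w} \<noteq> {v,w}" using vw_ne uv_ne uw_ne by (simp add: doubleton_eq_iff)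
  have i12: "{u,v} \<inter> {u,w} \<noteq> {}" and i13: "{u,v} \<inter> {v,w} \<noteq> {}" and i23: "{u,w} \<inter> {v,w} \<noteq> {}"
    by auto
  have propP: "\<And>\<delta> s. proper_coloring E s \<delta> \<Longrightarrow> \<delta> {u,v} \<noteq> \<delta> {u,w} \<and> \<delta> {u,v} \<noteq> \<delta> {v,w} \<and> \<delta> {u,w} \<noteq> \<delta> {v,w}"
  proof -
    fix \<delta> s assume "proper_coloring E s \<delta>"
    then have H: "\<forall>e\<in>E. \<forall>f\<in>E. e \<noteq> f \<and> e \<inter> f \<noteq> {} \<longrightarrow> \<delta> e \<noteq> \<delta> f"
      unfolding proper_coloring_def by blast
    have H2: "\<delta> e \<noteq> \<delta> f" if "e\<in>E" "f\<in>E" "e \<noteq> f" "e \<inter> f \<noteq> {}" for e f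
      using H that by blast
    show "\<delta> {u,v} \<noteq> \<delta> {u,w} \<and> \<delta> {u,v} \<noteq> \<delta> {v,w} \<and> \<delta> {u,w} \<noteq> \<delta> {v,w}"
      using H2[OF uv uw e12 i12] H2[OF uv vw e13 i13] H2[OF uw vw e23 i23] by simp
  qed
  have D3: "D \<ge> 3"
  proof -
    have g: "\<gamma> {u,v} \<in> {1..D}" "\<gamma> {u,w} \<in> {1..D}" "\<gamma> {v,w} \<in> {1..D}"
      using gamma uv uw vw unfolding proper_coloring_def D_def by blast+
    have ne: "\<gamma> {u,v} \<noteq> \<gamma> {u,w} \<and> \<gamma> {u,v} \<noteq> \<gamma> {v,w} \<and> \<gamma> {u,w} \<noteq> \<gamma> {v,w}"
      using propP[OF gamma] .
    have "card {\<gamma> {u,v}, \<gamma> {u,w}, \<gamma> {v,w}} = 3" using ne by simp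
    moreover have "card {\<gamma> {u,v}, \<gamma> {u,w}, \<gamma> {v,w}} \<le> card {1..D}"
      using g by (intro card_mono) auto
    ultimately show ?thesis by simp
  qed
  define a where "a = \<alpha> {u,w}"
  define b where "b = \<alpha> {v,w}"
  obtain c where c: "c \<in> {1..t}" "c \<noteq> 1" "c \<noteq> a" "c \<noteq> b"
  proof -
    have ab: "a \<noteq> b" using propP[OF Pa] unfolding a_def b_def by blast
    have sub: "{2,3,4} \<subseteq> {1..t}" using D3 unfolding t_def by auto
    show ?thesis
    proof (cases "2 \<noteq> a \<and> 2 \<noteq> b")
      case True then show ?thesis using that[of 2] sub by auto
    next
      case F1: False
      show ?thesis
      proof (cases "3 \<noteq> a \<and> 3 \<noteq> b")
        case True then show ?thesis using that[of 3] sub by auto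
      next
        case False then show ?thesis using that[of 4] sub F1 ab by auto
      qed
    qed
  qed
  obtain \<alpha>1 where K1: "(Kchange E t)\<^sup>*\<^sup>* \<alpha> \<alpha>1" and P1: "proper_coloring E t \<alpha>1"
    and O1: "\<forall>f. \<alpha>1 f = 1 \<longleftrightarrow> \<alpha> f = 1"
    and U1: "\<forall>f\<in>E. v\<in>f \<or> w\<in>f \<longrightarrow> \<alpha>1 f = \<alpha> f"
    and M1: "\<not>(\<exists>f\<in>E. u\<in>f \<and> \<alpha>1 f = c)"
    using make_missing[OF graph chordless Pa _ uv_ne uw_ne vw_ne uv uw vw c(1)] c auv
      unfolding t_def D_def a_def by auto
  have vu: "{v,u} \<in> E" using uv by (simp add: insert_commute)
  have a1vu: "\<alpha>1 {v,u} = 1" using O1 auv by (simp add: insert_commute)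
  have a1vw: "\<alpha>1 {v,w} = b" using U1 vw unfolding b_def by simp
  obtain \<alpha>2 where K2: "(Kchange E t)\<^sup>*\<^sup>* \<alpha>1 \<alpha>2" and P2: "proper_coloring E t \<alpha>2"
    and O2: "\<forall>f. \<alpha>2 f = 1 \<longleftrightarrow> \<alpha>1 f = 1"
    and U2: "\<forall>f\<in>E. u\<in>f \<or> w\<in>f \<longrightarrow> \<alpha>2 f = \<alpha>1 f"
    and M2: "\<not>(\<exists>f\<in>E. v\<in>f \<and> \<alpha>2 f = c)"
    using make_missing[OF graph chordless P1 _ uv_ne[symmetric] vw_ne uw_ne vu vw uw c(1)] c a1vu a1vw
      unfolding t_def D_def by auto
  have M2u: "\<not>(\<exists>f\<in>E. u\<in>f \<and> \<alpha>2 f = c)" using M1 U2 by auto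
  have a2uv: "\<alpha>2 {u,v} = 1" using O2 O1 auv by simp
  define e where "e = {u,v}"
  have eK: "e \<in> Kedges E \<alpha>2 1 c" using uv a2uv unfolding e_def Kedges_def by simp
  have comp: "Kcomponent E \<alpha>2 1 c e = {e}"
  proof
    show "{e} \<subseteq> Kcomponent E \<alpha>2 1 c e" unfolding Kcomponent_def by simp
  next
    have "f = e" if "(e,f) \<in> (Kadj E \<alpha>2 1 c)\<^sup>*" for f
      using that
    proof (induct rule: rtrancl_induct)
      case base then show ?case by simp
    next
      case (step f g)
      have gE: "g \<in> E" and gc: "\<alpha>2 g = 1 \<or> \<alpha>2 g = c" and gi: "g \<inter> e \<noteq> {}"
        using step(2,3) unfolding Kadj_def Kedges_def by auto
      have ug: "u \<in> g \<or> v \<in> g" using gi unfolding e_def by blast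
      have "\<alpha>2 g \<noteq> c" using ug M2 M2u gE by blast
      then have g1: "\<alpha>2 g = 1" using gc by simp
      show ?case
      proof (rule ccontr)
        assume "g \<noteq> e"
        then have "\<alpha>2 g \<noteq> \<alpha>2 e" using prop_app[OF P2 gE uv[folded e_def]] gi by blast
        then show False using g1 a2uv unfolding e_def by simp
      qed
    qed
    then show "Kcomponent E \<alpha>2 1 c e \<subseteq> {e}" unfolding Kcomponent_def by blast
  qed
  define \<alpha>3 where "\<alpha>3 = (\<lambda>f. if f \<in> Kcomponent E \<alpha>2 1 c e then (if \<alpha>2 f = 1 then c else 1) else \<alpha>2 f)"
  have K3: "Kchange E t \<alpha>2 \<alpha>3"
    unfolding Kchange_def using c eK unfolding \<alpha>3_def
    by (intro exI[of _ 1] exI[of _ c] exI[of _ e]) auto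
  have a3: "\<alpha>3 f = (if f = e then c else \<alpha>2 f)" for f
    unfolding \<alpha>3_def comp using a2uv unfolding e_def by simp
  have P3: "proper_coloring E t \<alpha>3" using proper_Kchange[OF P2 K3] .
  have Kb3: "(Kchange E t)\<^sup>*\<^sup>* \<beta> \<alpha>3"
    using Ka K1 K2 K3 by (meson rtranclp.rtrancl_into_rtrancl rtranclp_trans)
  have C3: "\<alpha>3 \<in> Ccol V E \<beta>"
    using P3 Kb3 unfolding Ccol_def K_equivalent_def t_def D_def by simp
  have one3: "\<alpha>3 f = 1 \<longleftrightarrow> \<alpha> f = 1" if "f \<noteq> e" for f
    using a3[of f] that O1 O2 by simp
  have bad_eq: "bad_edges E \<gamma> \<alpha>3 = bad_edges E \<gamma> \<alpha>"
  proof -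
    have "\<gamma> e \<noteq> 1" using guv unfolding e_def .
    show ?thesis
    proof (rule set_eqI)
      fix x show "x \<in> bad_edges E \<gamma> \<alpha>3 \<longleftrightarrow> x \<in> bad_edges E \<gamma> \<alpha>"
      proof (cases "x = e")
        case True then show ?thesis using \<open>\<gamma> e \<noteq> 1\<close> unfolding bad_edges_def by simp
      next
        case False then show ?thesis using one3[OF False] unfolding bad_edges_def by simp
      qed
    qed
  qed
  have ugly_eq: "ugly_edges E \<gamma> \<alpha>3 = ugly_edges E \<gamma> \<alpha> - {e}"
  proof -
    have "\<alpha>3 e \<noteq> 1" using a3[of e] c by simp
    show ?thesis
    proof (rule set_eqI)
      fix x show "x \<in> ugly_edges E \<gamma> \<alpha>3 \<longleftrightarrow> x \<in> ugly_edges E \<gamma> \<alpha> - {e}"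
      proof (cases "x = e")
        case True then show ?thesis using \<open>\<alpha>3 e \<noteq> 1\<close> unfolding ugly_edges_def by simp
      next
        case False then show ?thesis using one3[OF False] unfolding ugly_edges_def by simp
      qed
    qed
  qed
  have fin: "finite (ugly_edges E \<gamma> \<alpha>)"
    using finite_E[OF graph] unfolding ugly_edges_def by simp
  have "card (ugly_edges E \<gamma> \<alpha>3) < card (ugly_edges E \<gamma> \<alpha>)"
    unfolding ugly_eq using fin ugly unfolding e_def by (meson card_Diff1_less)
  moreover have "card (ugly_edges E \<gamma> \<alpha>) \<le> card (ugly_edges E \<gamma> \<alpha>3)"
    using minimal C3 bad_eq unfolding minimal_col_def by simp
  ultimately show False by simp
qed

end
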